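(* The graph $L_{8,2}$ has a perfect partition; that is, the set of all $8\times 8$ permutation matrices $P$ with $P\le A(L_{8,2})$ entrywise can be partitioned into subsets each of which sums to $A(L_{8,2})$ (each such subset necessarily has $6$ elements).
   Context: $L_{8,2}=K_{8,8}-4K_{2,2}$; its biadjacency matrix $A(L_{8,2})$ is the $8\times 8$ matrix which, written in $2\times 2$ block form $(A_{ij})_{1\le i,j\le 4}$, has $A_{ii}=O_2$ (zero matrix) and $A_{ij}=J_2$ (all-ones) for $i\ne j$. A regular bipartite graph $G$ has a perfect partition if its set of perfect matchings can be partitioned into parts each of which is a $1$-factorization of $G$; in matrix language, the set of permutation matrices $P\le A(G)$ can be partitioned into subsets each summing to $A(G)$. *)

theory Defs
  imports "HOL-Combinatorics.Permutations" "HOL-Library.Disjoint_Sets"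
begin

text \<open>Square n x n matrices with natural entries, indexed by 0..n-1, represented as
  functions nat => nat => nat (entries outside the index range are irrelevant/zero).\<close>

definition perm_matrix :: "nat \<Rightarrow> (nat \<Rightarrow> nat \<Rightarrow> nat) \<Rightarrow> bool" where
  "perm_matrix n P \<longleftrightarrow>
     (\<exists>\<sigma>. \<sigma> permutes {..<n} \<and> P = (\<lambda>i j. if i < n \<and> j < n \<and> \<sigma> i = j then 1 else 0))"

text \<open>Biadjacency matrix of L_{8,2} = K_{8,8} - 4K_{2,2}: 2x2 block form, zero diagonal
  blocks, all-ones off-diagonal blocks.\<close>
definition A_L82 :: "nat \<Rightarrow> nat \<Rightarrow> nat" where
  "A_L82 i j = (if i < 8 \<and> j < 8 \<and> i div 2 \<noteq> j div 2 then 1 else 0)"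

definition perm_matrices_below :: "nat \<Rightarrow> (nat \<Rightarrow> nat \<Rightarrow> nat) \<Rightarrow> (nat \<Rightarrow> nat \<Rightarrow> nat) set" where
  "perm_matrices_below n A = {P. perm_matrix n P \<and> (\<forall>i<n. \<forall>j<n. P i j \<le> A i j)}"

definition has_perfect_partition :: "nat \<Rightarrow> (nat \<Rightarrow> nat \<Rightarrow> nat) \<Rightarrow> bool" where
  "has_perfect_partition n A \<longleftrightarrow>
     (\<exists>\<P>. partition_on (perm_matrices_below n A) \<P> \<and>
          (\<forall>S\<in>\<P>. \<forall>i<n. \<forall>j<n. (\<Sum>P\<in>S. P i j) = A i j))"

end

theory Submission
  imports Defs "HOL-Library.List_Lexorder" "HOL-Library.Multiset"
begin

definition okl :: "nat list \<Rightarrow> bool" where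
"okl xs = (length xs = 8 \<and> distinct xs \<and> list_all (\<lambda>i. xs!i < 8 \<and> xs!i div 2 \<noteq> i div 2) [0..<8])"

definition isfact :: "nat list list \<Rightarrow> bool" where
"isfact G = (length G = 6 \<and> list_all okl G \<and> list_all (\<lambda>i. distinct (map (\<lambda>xs. xs!i) G)) [0..<8])"

definition cv :: "nat \<Rightarrow> nat" where "cv x = (if x < 2 then x else 2 * (x div 2))"

definition cap :: "nat \<Rightarrow> nat" where "cap v = (if v < 2 then 1 else 2)"

definition mat :: "nat list \<Rightarrow> nat \<Rightarrow> nat \<Rightarrow> nat" where
"mat xs = (\<lambda>i j. if i < 8 \<and> j < 8 \<and> xs!i = j then 1 else 0)"

definition partner :: "nat \<Rightarrow> nat" where "partner x = (if even x then Suc x else x - 1)"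

definition flipv :: "(nat \<Rightarrow> bool) \<Rightarrow> nat \<Rightarrow> nat" where
"flipv f x = (if f (x div 2) then partner x else x)"

fun gen :: "nat \<Rightarrow> nat \<Rightarrow> nat list \<Rightarrow> nat list list" where
"gen 0 k pre = [pre]" |
"gen (Suc n) k pre = concat (map (\<lambda>v. gen n (Suc k) (pre @ [v]))
   (filter (\<lambda>v. v div 2 \<noteq> k div 2 \<and> count_list pre v < cap v) [0,1,2,4,6]))"

fun merge :: "'a::linorder list \<Rightarrow> 'a list \<Rightarrow> 'a list" where
"merge [] ys = ys" | "merge xs [] = xs" |
"merge (x#xs) (y#ys) = (if x \<le> y then x # merge xs (y#ys) else y # merge (x#xs) ys)"

fun mpairs :: "'a::linorder list list \<Rightarrow> 'a list list" where
"mpairs (a#b#xs) = merge a b # mpairs xs" | "mpairs xs = xs"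

lemma length_mpairs: "length (mpairs xs) \<le> length xs"
  by (induction xs rule: mpairs.induct) auto

lemma length_mpairs2: "length (mpairs (a#b#xs)) < length (a#b#xs)"
  using length_mpairs[of xs] by simp

function mall :: "'a::linorder list list \<Rightarrow> 'a list" where
"mall [] = []" | "mall [x] = x" | "mall (a#b#xs) = mall (mpairs (a#b#xs))"
  by pat_completeness auto
termination by (relation "measure length") (use length_mpairs2 in \<open>auto simp del: mpairs.simps\<close>)

definition msort :: "'a::linorder list \<Rightarrow> 'a list" where "msort xs = mall (map (\<lambda>x. [x]) xs)"

lemma mset_merge: "mset (merge xs ys) = mset xs + mset ys"
  by (induction xs ys rule: merge.induct) auto

lemma mset_mpairs: "sum_list (map mset (mpairs xss)) = sum_list (map mset xss)"
  by (induction xss rule: mpairs.induct) (auto simp: mset_merge)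

lemma mset_mall: "mset (mall xss) = sum_list (map mset xss)"
proof (induction xss rule: mall.induct)
  case (3 a b xs)
  then show ?case using mset_mpairs[of "a#b#xs"] by (simp del: mpairs.simps)
qed auto

lemma mset_msort: "mset (msort xs) = mset xs"
  unfolding msort_def mset_mall by (induction xs) auto

lemma okl_iff: "okl xs \<longleftrightarrow> length xs = 8 \<and> distinct xs \<and> (\<forall>i<8. xs!i < 8 \<and> xs!i div 2 \<noteq> i div 2)"
  unfolding okl_def list_all_iff by auto

lemma okl_set: assumes "okl xs" shows "set xs = {..<8}"
proof -
  have d: "distinct xs" "length xs = 8" and lt: "\<forall>i<8. xs!i < 8" using assms by (auto simp: okl_iff)
  have sub: "set xs \<subseteq> {..<8}" using lt d by (auto simp: in_set_conv_nth)
  have "card (set xs) = 8" using d distinct_card by metis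
  then show ?thesis using sub by (intro card_subset_eq) auto
qed

lemma partner_div: "partner x div 2 = x div 2"
  unfolding partner_def by (cases "even x") (auto elim!: evenE oddE)

lemma partner_partner: "partner (partner x) = x"
  unfolding partner_def by (cases "even x") (auto elim!: evenE oddE)

lemma partner_eq: "x div 2 = y div 2 \<Longrightarrow> x \<noteq> y \<Longrightarrow> y = partner x"
  unfolding partner_def by (cases "even x"; cases "even y") (auto elim!: evenE oddE)

lemma flipv_div: "flipv f x div 2 = x div 2"
  by (simp add: flipv_def partner_div)

lemma flipv_flipv: "flipv f (flipv f x) = x"
  by (simp add: flipv_def partner_div partner_partner)

lemma flipv_inj: "inj (flipv f)"
  by (metis flipv_flipv injI)

lemma flipv_lt: "x < 8 \<Longrightarrow> flipv f x < 8"
proof -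
  assume "x < 8"
  moreover have "flipv f x div 2 = x div 2" by (rule flipv_div)
  ultimately show ?thesis by presburger
qed

lemma cv_div: "cv x div 2 = x div 2"
  by (simp add: cv_def)

lemma cv_eq: "cv x = cv y \<Longrightarrow> x div 2 = y div 2 \<and> (x < 2 \<longrightarrow> x = y)"
  by (auto simp: cv_def split: if_splits)

lemma cv_alt: "cv y = (if y div 2 = 0 then y else 2 * (y div 2))"
  unfolding cv_def by (cases "y < 2") (auto simp: div_eq_0_iff)

lemma cv_flipv: "\<not> f 0 \<Longrightarrow> cv (flipv f x) = cv x"
  unfolding cv_alt flipv_div by (auto simp: flipv_def)

lemma okl_flip: "okl ys \<Longrightarrow> okl (map (flipv f) ys)"
  unfolding okl_iff using flipv_inj
  by (auto simp: distinct_map flipv_div flipv_lt inj_on_def)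

lemma map_nth_map: "\<forall>x\<in>set G. i < length x \<Longrightarrow> map (\<lambda>xs. xs!i) (map (map h) G) = map h (map (\<lambda>xs. xs!i) G)"
  by (induction G) auto

lemma isfact_flip: assumes "isfact G" shows "isfact (map (map (flipv f)) G)"
proof -
  have 1: "length G = 6" "\<forall>xs\<in>set G. okl xs" "\<forall>i<8. distinct (map (\<lambda>xs. xs!i) G)"
    using assms by (auto simp: isfact_def list_all_iff)
  have "\<forall>i<8. distinct (map (\<lambda>xs. xs!i) (map (map (flipv f)) G))"
  proof (intro allI impI)
    fix i :: nat assume i: "i < 8"
    have eq: "map (\<lambda>xs. xs!i) (map (map (flipv f)) G) = map (flipv f) (map (\<lambda>xs. xs!i) G)"
    proof -
      have "\<forall>x\<in>set G. i < length x"
      proof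
        fix x assume x: "x \<in> set G"
        then have "okl x" using 1(2) by blast
        then show "i < length x" unfolding okl_def using i by simp
      qed
      then show ?thesis using map_nth_map[of G i "flipv f"] by simp
    qed
    show "distinct (map (\<lambda>xs. xs!i) (map (map (flipv f)) G))"
    proof -
      have "inj_on (flipv f) (set (map (\<lambda>xs. xs!i) G))"
        by (rule inj_on_subset[OF flipv_inj]) simp
      moreover have "distinct (map (\<lambda>xs. xs!i) G)" using 1(3) i by blast
      ultimately show ?thesis unfolding eq by (metis distinct_map)
    qed
  qed
  then show ?thesis using 1 okl_flip by (auto simp: isfact_def list_all_iff)
qed

lemma mat_inj: assumes "okl xs" "okl ys" "mat xs = mat ys" shows "xs = ys"
proof (rule nth_equalityI)
  show "length xs = length ys" using assms by (simp add: okl_iff)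
  fix i assume "i < length xs"
  then have i: "i < 8" using assms by (simp add: okl_iff)
  have "mat xs i (xs!i) = 1" using i assms(1) by (simp add: mat_def okl_iff)
  then have "mat ys i (xs!i) = 1" using assms(3) by simp
  then show "xs!i = ys!i" by (simp add: mat_def split: if_splits)
qed

lemma card_allowed: "i < (8::nat) \<Longrightarrow> card {j. j < 8 \<and> j div 2 \<noteq> i div 2} = 6"
proof -
  assume i: "i < 8"
  have "{j. j < 8 \<and> j div 2 \<noteq> i div 2} = {..<8} - {2 * (i div 2), 2 * (i div 2) + 1}"
    by auto
  moreover have "card ({..<8::nat} - {2 * (i div 2), 2 * (i div 2) + 1}) = 6"
  proof -
    have "2 * (i div 2) + 1 < 8" using i by presburger
    then show ?thesis by (subst card_Diff_subset) auto
  qed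
  ultimately show ?thesis by simp
qed

lemma fact_sum: assumes "isfact G" "i < 8" "j < 8"
  shows "(\<Sum>P\<in>mat ` set G. P i j) = A_L82 i j"
proof -
  have len: "length G = 6" and okG: "\<forall>xs\<in>set G. okl xs" and col: "distinct (map (\<lambda>xs. xs!i) G)"
    using assms by (auto simp: isfact_def list_all_iff)
  have inj: "inj_on mat (set G)" using okG mat_inj by (auto intro: inj_onI)
  have "(\<Sum>P\<in>mat ` set G. P i j) = (\<Sum>xs\<in>set G. mat xs i j)"
    by (simp add: sum.reindex[OF inj])
  also have "\<dots> = (\<Sum>xs\<in>set G. if xs!i = j then 1 else 0)"
    using assms(2,3) by (simp add: mat_def)
  also have "\<dots> = card {xs\<in>set G. xs!i = j}"
    by (simp add: sum.If_cases Int_def)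
  also have "\<dots> = card ((\<lambda>xs. xs!i) ` {xs\<in>set G. xs!i = j})"
    using col by (intro card_image[symmetric]) (auto simp: distinct_map inj_on_def)
  also have "(\<lambda>xs. xs!i) ` {xs\<in>set G. xs!i = j} = {j} \<inter> set (map (\<lambda>xs. xs!i) G)"
    by auto
  also have "set (map (\<lambda>xs. xs!i) G) = {j. j < 8 \<and> j div 2 \<noteq> i div 2}"
  proof (rule card_subset_eq)
    show "finite {j. j < 8 \<and> j div 2 \<noteq> i div 2}" by simp
    show "set (map (\<lambda>xs. xs!i) G) \<subseteq> {j. j < 8 \<and> j div 2 \<noteq> i div 2}"
      using okG assms(2) by (auto simp: okl_iff)
    show "card (set (map (\<lambda>xs. xs!i) G)) = card {j. j < 8 \<and> j div 2 \<noteq> i div 2}"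
      using distinct_card[OF col] len card_allowed[OF assms(2)] by simp
  qed
  finally show ?thesis using assms(2,3) by (auto simp: A_L82_def)
qed

lemma below_eq: "perm_matrices_below 8 A_L82 = mat ` {xs. okl xs}"
proof
  show "perm_matrices_below 8 A_L82 \<subseteq> mat ` {xs. okl xs}"
  proof
    fix P assume "P \<in> perm_matrices_below 8 A_L82"
    then obtain \<sigma> where s: "\<sigma> permutes {..<8}"
      and P: "P = (\<lambda>i j. if i < 8 \<and> j < 8 \<and> \<sigma> i = j then 1 else 0)"
      and le: "\<forall>i<8. \<forall>j<8. P i j \<le> A_L82 i j"
      by (auto simp: perm_matrices_below_def perm_matrix_def)
    define xs where "xs = map \<sigma> [0..<8]"
    have nth: "i < 8 \<Longrightarrow> xs!i = \<sigma> i" for i by (simp add: xs_def)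
    have lt: "i < 8 \<Longrightarrow> \<sigma> i < 8" for i using permutes_in_image[OF s] by simp
    have "okl xs"
      unfolding okl_iff
    proof (intro conjI allI impI)
      show "length xs = 8" by (simp add: xs_def)
      show "distinct xs" unfolding xs_def using permutes_inj_on[OF s]
        by (simp add: distinct_map inj_on_subset lessThan_atLeast0)
      fix i :: nat assume i: "i < 8"
      show "xs!i < 8" using lt i nth by simp
      have "P i (\<sigma> i) \<le> A_L82 i (\<sigma> i)" using le i lt by simp
      then show "xs!i div 2 \<noteq> i div 2" using P i lt nth by (simp add: A_L82_def split: if_splits)
    qed
    moreover have "mat xs = P" unfolding P mat_def using nth by (intro ext) auto
    ultimately show "P \<in> mat ` {xs. okl xs}" by blast
  qed
next
  show "mat ` {xs. okl xs} \<subseteq> perm_matrices_below 8 A_L82"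
  proof
    fix P assume "P \<in> mat ` {xs. okl xs}"
    then obtain xs where ok: "okl xs" and P: "P = mat xs" by blast
    have len: "length xs = 8" and d: "distinct xs" and lt: "\<forall>i<8. xs!i < 8 \<and> xs!i div 2 \<noteq> i div 2"
      using ok by (auto simp: okl_iff)
    define \<sigma> where "\<sigma> i = (if i < 8 then xs!i else i)" for i
    have inj: "inj_on \<sigma> {..<8}"
      using d len by (auto simp: inj_on_def \<sigma>_def nth_eq_iff_index_eq)
    have img: "\<sigma> ` {..<8} \<subseteq> {..<8}" using lt by (auto simp: \<sigma>_def)
    have "\<sigma> ` {..<8} = {..<8}" using endo_inj_surj[OF _ img inj] by simp
    then have "bij_betw \<sigma> {..<8} {..<8}" using inj by (simp add: bij_betw_def)
    then have perm: "\<sigma> permutes {..<8}" by (rule bij_imp_permutes) (simp add: \<sigma>_def)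
    have "P = (\<lambda>i j. if i < 8 \<and> j < 8 \<and> \<sigma> i = j then 1 else 0)"
      unfolding P mat_def \<sigma>_def by (intro ext) auto
    then have "perm_matrix 8 P" using perm unfolding perm_matrix_def by blast
    moreover have "\<forall>i<8. \<forall>j<8. P i j \<le> A_L82 i j"
      using lt by (auto simp: P mat_def A_L82_def)
    ultimately show "P \<in> perm_matrices_below 8 A_L82" by (simp add: perm_matrices_below_def)
  qed
qed

lemma gen_complete:
  "length ys = n \<Longrightarrow> (\<forall>i<n. ys!i div 2 \<noteq> (k+i) div 2 \<and> ys!i \<in> {0,1,2,4,6})
   \<Longrightarrow> (\<forall>v. count_list (pre@ys) v \<le> cap v) \<Longrightarrow> pre @ ys \<in> set (gen n k pre)"
proof (induction n arbitrary: k pre ys)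
  case 0
  then show ?case by simp
next
  case (Suc n)
  then obtain y ys' where ys: "ys = y # ys'" by (cases ys) auto
  have y: "y div 2 \<noteq> k div 2" "y \<in> {0,1,2,4,6}" using Suc.prems(2) ys by force+
  have "count_list (pre@ys) y \<le> cap y" using Suc.prems(3) by blast
  then have cnt: "count_list pre y < cap y" using ys by simp
  have "(pre@[y]) @ ys' \<in> set (gen n (Suc k) (pre@[y]))"
  proof (rule Suc.IH)
    show "length ys' = n" using Suc.prems(1) ys by simp
    show "\<forall>i<n. ys'!i div 2 \<noteq> (Suc k + i) div 2 \<and> ys'!i \<in> {0,1,2,4,6}"
    proof (intro allI impI)
      fix i assume "i < n"
      then have "Suc i < Suc n" by simp
      then show "ys'!i div 2 \<noteq> (Suc k + i) div 2 \<and> ys'!i \<in> {0,1,2,4,6}"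
        using Suc.prems(2) ys by (metis add_Suc_right add_Suc_shift nth_Cons_Suc)
    qed
    show "\<forall>v. count_list ((pre@[y]) @ ys') v \<le> cap v" using Suc.prems(3) ys by simp
  qed
  then show ?case using y cnt ys by auto
qed

lemma cv_count: assumes "okl xs" shows "count_list (map cv xs) v \<le> cap v"
proof -
  have d: "distinct xs" and lt: "set xs \<subseteq> {..<8}" using assms okl_set by (auto simp: okl_iff)
  have "count_list (map cv xs) v = length (filter (\<lambda>x. v = cv x) xs)"
    by (simp add: count_list_eq_length_filter filter_map comp_def)
  also have "\<dots> = card (set (filter (\<lambda>x. v = cv x) xs))"
    by (metis d distinct_card distinct_filter)
  also have "\<dots> \<le> card (if v < 2 then {v} else {v, v+1})"
  proof (rule card_mono)
    show "finite (if v < 2 then {v} else {v, v+1})" by simp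
    show "set (filter (\<lambda>x. v = cv x) xs) \<subseteq> (if v < 2 then {v} else {v, v+1})"
      by (auto simp: cv_def split: if_splits)
  qed
  also have "\<dots> \<le> cap v" by (simp add: cap_def)
  finally show ?thesis .
qed

lemma cv_gen: assumes "okl xs" shows "map cv xs \<in> set (gen 8 0 [])"
proof -
  have lt: "\<forall>i<8. xs!i < 8 \<and> xs!i div 2 \<noteq> i div 2" and len: "length xs = 8"
    using assms by (auto simp: okl_iff)
  have vals: "x < 8 \<Longrightarrow> cv x \<in> {0,1,2,4,6}" for x
    by (auto simp: cv_def)
  have "[] @ map cv xs \<in> set (gen 8 0 [])"
    using lt len vals cv_div cv_count[OF assms] by (intro gen_complete) auto
  then show ?thesis by simp
qed

lemma cv_flip_exists:
  assumes ox: "okl xs" and oy: "okl ys" and eq: "map cv xs = map cv ys"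
  shows "\<exists>f. \<not> f 0 \<and> xs = map (flipv f) ys"
proof -
  have lx: "length xs = 8" and dx: "distinct xs" and ly: "length ys = 8" and dy: "distinct ys"
    using ox oy by (auto simp: okl_iff)
  have cvi: "i < 8 \<Longrightarrow> cv (xs!i) = cv (ys!i)" for i
    using eq lx ly by (metis nth_map)
  define f where "f b = (\<exists>k<8. xs!k div 2 = b \<and> xs!k \<noteq> ys!k)" for b
  have f0: "\<not> f 0"
  proof
    assume "f 0"
    then obtain k where k: "k < 8" "xs!k div 2 = 0" "xs!k \<noteq> ys!k" by (auto simp: f_def)
    have "xs!k < 2" using k(2) by presburger
    then show False using cv_eq[OF cvi[OF k(1)]] k(3) by simp
  qed
  have "xs!i = flipv f (ys!i)" if i: "i < 8" for i
  proof (cases "xs!i = ys!i")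
    case False
    have bl: "ys!i div 2 = xs!i div 2" using cv_eq[OF cvi[OF i]] by simp
    have "f (ys!i div 2)" unfolding f_def using i False bl by auto
    then show ?thesis using partner_eq[OF bl[symmetric] False] by (simp add: flipv_def partner_partner)
  next
    case True
    have "\<not> f (ys!i div 2)"
    proof
      assume "f (ys!i div 2)"
      then obtain k where k: "k < 8" "xs!k div 2 = ys!i div 2" "xs!k \<noteq> ys!k" by (auto simp: f_def)
      have ki: "k \<noteq> i" using k True by auto
      have bk: "ys!k div 2 = xs!k div 2" using cv_eq[OF cvi[OF k(1)]] by simp
      have ne: "ys!k \<noteq> ys!i" using dy ly ki k(1) i by (simp add: nth_eq_iff_index_eq)
      have "ys!k = partner (ys!i)" using partner_eq[of "ys!i" "ys!k"] ne bk k(2) by simp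
      moreover have "xs!k = partner (ys!k)" using partner_eq[of "ys!k" "xs!k"] bk k(3) by simp
      ultimately have "xs!k = xs!i" using True partner_partner by simp
      then show False using dx lx ki k(1) i by (simp add: nth_eq_iff_index_eq)
    qed
    then show ?thesis using True by (simp add: flipv_def)
  qed
  then have "xs = map (flipv f) ys" using lx ly by (intro nth_equalityI) auto
  then show ?thesis using f0 by blast
qed

lemma flip_agree:
  assumes oy: "okl ys" and oz: "okl zs" and eq: "map (flipv f) ys = map (flipv g) ys"
  shows "map (flipv f) zs = map (flipv g) zs"
proof -
  have "\<forall>x\<in>set ys. flipv f x = flipv g x" using eq by (simp add: map_eq_conv)
  then have "\<forall>x<8. flipv f x = flipv g x" using okl_set[OF oy] by auto
  then show ?thesis using okl_set[OF oz] by (auto simp: map_eq_conv)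
qed

definition Base :: "nat list list list" where
"Base = [[[6,4,5,7,0,2,3,1],[2,5,7,6,1,3,4,0],[3,6,4,5,7,1,0,2],[4,7,1,0,3,6,2,5],[5,2,0,4,6,7,1,3],[7,3,6,1,2,0,5,4]],
 [[6,4,7,1,2,3,0,5],[2,5,6,0,3,7,4,1],[3,2,4,6,7,1,5,0],[4,7,1,5,6,0,3,2],[5,3,0,7,1,6,2,4],[7,6,5,4,0,2,1,3]],
 [[6,2,4,5,7,3,0,1],[2,3,5,6,1,7,4,0],[3,6,7,0,2,1,5,4],[4,5,1,7,0,6,2,3],[5,7,6,4,3,0,1,2],[7,4,0,1,6,2,3,5]],
 [[4,5,0,6,7,2,3,1],[2,3,5,7,1,6,0,4],[3,7,6,5,2,1,4,0],[5,4,7,0,6,3,1,2],[6,2,1,4,0,7,5,3],[7,6,4,1,3,0,2,5]],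
 [[2,4,5,6,3,7,1,0],[3,7,1,5,2,6,0,4],[4,3,6,7,0,1,5,2],[5,2,7,0,6,3,4,1],[6,5,4,1,7,0,2,3],[7,6,0,4,1,2,3,5]],
 [[4,2,6,7,0,1,3,5],[2,3,7,5,1,6,4,0],[3,5,0,4,6,7,1,2],[5,6,4,1,7,2,0,3],[6,7,1,0,2,3,5,4],[7,4,5,6,3,0,2,1]],
 [[2,6,7,4,0,1,3,5],[3,5,1,6,2,7,4,0],[4,7,5,0,6,3,1,2],[5,3,6,1,7,2,0,4],[6,2,4,7,1,0,5,3],[7,4,0,5,3,6,2,1]],
 [[4,2,6,5,7,0,3,1],[2,3,4,7,0,6,1,5],[3,6,1,4,2,7,5,0],[5,7,0,1,6,2,4,3],[6,5,7,0,1,3,2,4],[7,4,5,6,3,1,0,2]],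
 [[2,4,6,5,7,1,0,3],[3,5,1,7,6,0,2,4],[4,2,7,0,3,6,1,5],[5,3,0,6,2,7,4,1],[6,7,4,1,0,3,5,2],[7,6,5,4,1,2,3,0]],
 [[6,2,7,1,0,3,4,5],[2,5,4,6,1,7,0,3],[3,7,6,4,2,0,5,1],[4,3,5,7,6,1,2,0],[5,4,1,0,7,6,3,2],[7,6,0,5,3,2,1,4]],
 [[6,4,1,7,2,0,3,5],[2,5,0,6,7,1,4,3],[3,6,4,0,1,7,5,2],[4,3,7,5,0,6,2,1],[5,7,6,4,3,2,1,0],[7,2,5,1,6,3,0,4]],
 [[2,4,6,7,0,3,1,5],[3,6,4,5,7,2,0,1],[4,3,7,6,1,0,5,2],[5,2,1,4,6,7,3,0],[6,7,5,0,3,1,2,4],[7,5,0,1,2,6,4,3]],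
 [[6,2,4,7,1,0,3,5],[2,5,1,6,7,3,4,0],[3,7,5,0,2,6,1,4],[4,6,0,5,3,7,2,1],[5,4,7,1,6,2,0,3],[7,3,6,4,0,1,5,2]],
 [[4,6,7,5,1,2,3,0],[2,3,0,1,7,6,4,5],[3,7,1,4,6,0,5,2],[5,4,6,7,2,1,0,3],[6,5,4,0,3,7,2,1],[7,2,5,6,0,3,1,4]],
 [[6,7,1,4,2,0,3,5],[2,6,4,7,3,1,5,0],[3,2,5,0,7,6,1,4],[4,5,7,6,1,2,0,3],[5,3,6,1,0,7,4,2],[7,4,0,5,6,3,2,1]],
 [[2,4,6,1,0,7,3,5],[3,5,7,0,6,1,2,4],[4,2,1,6,7,0,5,3],[5,3,4,7,1,6,0,2],[6,7,0,5,2,3,4,1],[7,6,5,4,3,2,1,0]],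
 [[4,6,7,5,1,0,2,3],[2,3,4,7,0,6,5,1],[3,4,6,1,7,2,0,5],[5,7,0,6,3,1,4,2],[6,5,1,0,2,7,3,4],[7,2,5,4,6,3,1,0]],
 [[4,2,6,7,1,3,0,5],[2,6,0,4,3,7,5,1],[3,7,1,5,0,6,2,4],[5,4,7,1,6,2,3,0],[6,3,5,0,7,1,4,2],[7,5,4,6,2,0,1,3]],
 [[4,5,6,7,2,3,0,1],[2,4,5,6,1,7,3,0],[3,6,1,0,7,2,4,5],[5,7,0,4,3,6,1,2],[6,3,7,5,0,1,2,4],[7,2,4,1,6,0,5,3]],
 [[6,4,1,7,2,3,0,5],[2,6,5,4,0,7,1,3],[3,5,7,1,6,2,4,0],[4,3,0,5,7,6,2,1],[5,7,4,6,1,0,3,2],[7,2,6,0,3,1,5,4]],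
 [[2,4,6,0,1,7,5,3],[3,7,0,5,6,1,2,4],[4,5,7,6,3,2,1,0],[5,6,4,7,2,3,0,1],[6,2,1,4,7,0,3,5],[7,3,5,1,0,6,4,2]],
 [[4,2,6,5,7,3,1,0],[2,5,7,6,0,1,4,3],[3,4,0,1,6,7,2,5],[5,7,1,4,3,6,0,2],[6,3,4,7,2,0,5,1],[7,6,5,0,1,2,3,4]],
 [[4,2,6,7,1,3,5,0],[2,3,1,6,0,7,4,5],[3,6,4,5,7,0,2,1],[5,7,0,4,6,2,1,3],[6,5,7,0,2,1,3,4],[7,4,5,1,3,6,0,2]],
 [[6,2,0,4,7,3,5,1],[2,4,7,5,1,6,3,0],[3,7,5,1,6,0,4,2],[4,3,1,6,0,7,2,5],[5,6,4,7,2,1,0,3],[7,5,6,0,3,2,1,4]],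
 [[4,2,5,0,6,7,3,1],[2,7,4,6,1,3,0,5],[3,6,0,1,7,2,5,4],[5,3,7,4,2,6,1,0],[6,5,1,7,3,0,4,2],[7,4,6,5,0,1,2,3]],
 [[6,2,4,5,3,7,0,1],[2,7,5,1,6,0,3,4],[3,6,7,4,0,2,1,5],[4,5,0,6,7,1,2,3],[5,3,1,7,2,6,4,0],[7,4,6,0,1,3,5,2]],
 [[4,2,6,0,3,7,5,1],[2,3,0,7,6,1,4,5],[3,4,1,5,7,6,0,2],[5,7,4,6,1,3,2,0],[6,5,7,1,0,2,3,4],[7,6,5,4,2,0,1,3]],
 [[4,2,6,0,1,7,5,3],[2,7,1,5,6,0,3,4],[3,6,4,1,7,2,0,5],[5,4,0,7,3,6,1,2],[6,5,7,4,0,3,2,1],[7,3,5,6,2,1,4,0]],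
 [[2,6,4,0,7,1,5,3],[3,4,7,5,0,6,2,1],[4,7,1,6,3,2,0,5],[5,2,6,7,1,0,3,4],[6,3,5,1,2,7,4,0],[7,5,0,4,6,3,1,2]],
 [[2,6,4,0,7,1,3,5],[3,7,6,5,0,2,4,1],[4,5,7,6,2,0,1,3],[5,2,1,7,3,6,0,4],[6,3,5,4,1,7,2,0],[7,4,0,1,6,3,5,2]],
 [[2,3,4,1,6,7,5,0],[3,6,0,4,7,2,1,5],[4,7,5,6,0,3,2,1],[5,4,1,7,2,6,0,3],[6,5,7,0,3,1,4,2],[7,2,6,5,1,0,3,4]],
 [[4,6,7,0,1,2,3,5],[2,7,0,4,6,3,5,1],[3,4,5,1,7,6,0,2],[5,2,1,6,0,7,4,3],[6,5,4,7,3,1,2,0],[7,3,6,5,2,0,1,4]],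
 [[4,2,6,5,3,7,0,1],[2,3,7,4,6,0,1,5],[3,7,0,6,1,2,5,4],[5,6,1,7,2,3,4,0],[6,4,5,0,7,1,3,2],[7,5,4,1,0,6,2,3]],
 [[4,6,1,5,0,7,2,3],[2,4,7,6,3,1,5,0],[3,5,4,7,6,2,0,1],[5,3,6,1,7,0,4,2],[6,7,5,0,2,3,1,4],[7,2,0,4,1,6,3,5]],
 [[4,2,1,5,6,7,0,3],[2,6,4,7,0,3,1,5],[3,5,7,6,1,0,2,4],[5,7,6,0,3,1,4,2],[6,4,5,1,7,2,3,0],[7,3,0,4,2,6,5,1]],
 [[2,6,4,7,1,0,3,5],[3,2,1,5,6,7,4,0],[4,7,5,0,3,6,2,1],[5,3,0,6,7,2,1,4],[6,4,7,1,0,3,5,2],[7,5,6,4,2,1,0,3]],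
 [[6,2,7,4,1,3,5,0],[2,6,5,1,3,7,0,4],[3,4,0,7,2,6,1,5],[4,7,6,5,0,1,3,2],[5,3,4,6,7,0,2,1],[7,5,1,0,6,2,4,3]],
 [[2,6,4,0,3,7,5,1],[3,5,7,1,0,6,4,2],[4,3,5,7,6,2,1,0],[5,7,0,6,2,1,3,4],[6,4,1,5,7,0,2,3],[7,2,6,4,1,3,0,5]],
 [[6,7,4,5,0,1,2,3],[2,4,0,7,1,6,3,5],[3,5,6,1,2,7,4,0],[4,6,1,0,7,3,5,2],[5,3,7,4,6,2,0,1],[7,2,5,6,3,0,1,4]],
 [[2,6,4,7,0,3,5,1],[3,4,6,5,1,7,0,2],[4,3,7,1,6,0,2,5],[5,7,0,6,3,2,1,4],[6,2,5,4,7,1,3,0],[7,5,1,0,2,6,4,3]],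
 [[4,6,1,0,7,2,3,5],[2,4,6,7,3,0,5,1],[3,7,4,5,6,1,2,0],[5,2,7,4,0,6,1,3],[6,3,5,1,2,7,0,4],[7,5,0,6,1,3,4,2]],
 [[2,3,6,4,0,7,5,1],[3,5,4,7,6,1,2,0],[4,6,7,5,1,2,0,3],[5,7,1,6,2,0,3,4],[6,4,5,0,7,3,1,2],[7,2,0,1,3,6,4,5]],
 [[6,4,1,5,2,7,3,0],[2,3,6,1,7,0,5,4],[3,7,4,0,1,6,2,5],[4,2,5,7,6,3,0,1],[5,6,7,4,0,2,1,3],[7,5,0,6,3,1,4,2]],
 [[4,6,7,1,2,3,0,5],[2,3,4,5,6,7,1,0],[3,2,6,7,0,1,5,4],[5,4,1,6,7,0,3,2],[6,7,5,0,3,2,4,1],[7,5,0,4,1,6,2,3]],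
 [[6,7,1,4,2,0,5,3],[2,6,4,7,3,1,0,5],[3,4,5,0,6,7,2,1],[4,5,7,6,1,2,3,0],[5,3,0,1,7,6,4,2],[7,2,6,5,0,3,1,4]],
 [[6,4,7,5,1,0,2,3],[2,6,1,7,0,3,4,5],[3,5,4,6,2,7,0,1],[4,2,5,1,7,6,3,0],[5,7,6,0,3,2,1,4],[7,3,0,4,6,1,5,2]],
 [[2,6,4,5,3,7,1,0],[3,4,7,6,0,1,2,5],[4,3,5,1,7,6,0,2],[5,2,1,7,6,0,3,4],[6,7,0,4,1,2,5,3],[7,5,6,0,2,3,4,1]],
 [[4,5,6,0,2,7,3,1],[2,6,7,1,0,3,4,5],[3,7,4,6,1,0,5,2],[5,3,0,7,6,1,2,4],[6,4,1,5,7,2,0,3],[7,2,5,4,3,6,1,0]],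
 [[4,6,7,1,2,0,5,3],[2,5,0,6,3,7,4,1],[3,4,6,7,1,2,0,5],[5,7,1,4,6,3,2,0],[6,2,5,0,7,1,3,4],[7,3,4,5,0,6,1,2]],
 [[6,4,7,5,0,2,1,3],[2,3,1,0,6,7,5,4],[3,5,0,1,7,6,4,2],[4,6,5,7,3,1,2,0],[5,7,6,4,2,0,3,1],[7,2,4,6,1,3,0,5]],
 [[2,4,0,5,6,7,3,1],[3,2,6,7,1,0,5,4],[4,5,7,0,3,6,1,2],[5,6,1,4,7,2,0,3],[6,7,5,1,2,3,4,0],[7,3,4,6,0,1,2,5]],
 [[6,4,5,1,2,7,3,0],[2,7,6,5,1,3,0,4],[3,2,4,7,6,0,1,5],[4,3,0,6,7,1,5,2],[5,6,7,0,3,2,4,1],[7,5,1,4,0,6,2,3]],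
 [[6,7,4,1,0,2,3,5],[2,5,6,0,7,1,4,3],[3,6,7,4,1,0,5,2],[4,3,5,7,2,6,0,1],[5,4,1,6,3,7,2,0],[7,2,0,5,6,3,1,4]],
 [[2,6,4,5,7,3,1,0],[3,7,6,1,2,0,5,4],[4,5,7,0,1,6,2,3],[5,3,0,7,6,2,4,1],[6,2,1,4,3,7,0,5],[7,4,5,6,0,1,3,2]],
 [[4,6,5,0,7,2,3,1],[2,5,7,4,0,6,1,3],[3,4,0,7,6,1,2,5],[5,2,6,1,3,7,4,0],[6,7,4,5,1,3,0,2],[7,3,1,6,2,0,5,4]],
 [[2,3,6,0,1,7,4,5],[3,5,4,6,7,0,2,1],[4,6,5,7,2,3,1,0],[5,4,7,1,3,6,0,2],[6,7,1,4,0,2,5,3],[7,2,0,5,6,1,3,4]],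
 [[4,5,6,1,2,7,3,0],[2,3,1,5,7,6,0,4],[3,2,4,7,6,0,5,1],[5,6,7,0,1,3,4,2],[6,7,0,4,3,1,2,5],[7,4,5,6,0,2,1,3]],
 [[6,4,5,0,7,2,3,1],[2,7,6,4,3,0,1,5],[3,2,0,7,1,6,5,4],[4,3,7,5,6,1,0,2],[5,6,4,1,0,7,2,3],[7,5,1,6,2,3,4,0]],
 [[4,2,6,5,7,1,3,0],[2,3,1,7,6,0,4,5],[3,6,5,4,2,7,0,1],[5,4,7,6,0,3,1,2],[6,7,0,1,3,2,5,4],[7,5,4,0,1,6,2,3]],
 [[4,2,6,7,3,1,5,0],[2,5,4,6,0,7,1,3],[3,7,0,5,1,6,4,2],[5,6,7,4,2,3,0,1],[6,4,1,0,7,2,3,5],[7,3,5,1,6,0,2,4]],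
 [[4,2,5,6,0,7,1,3],[2,5,6,1,7,0,3,4],[3,4,7,0,6,2,5,1],[5,3,4,7,1,6,2,0],[6,7,0,5,3,1,4,2],[7,6,1,4,2,3,0,5]],
 [[4,2,1,0,6,7,5,3],[2,7,6,4,3,1,0,5],[3,4,5,7,0,6,2,1],[5,6,0,1,7,2,3,4],[6,3,7,5,1,0,4,2],[7,5,4,6,2,3,1,0]],
 [[4,2,6,7,3,0,1,5],[2,5,1,0,6,7,3,4],[3,6,5,1,7,2,4,0],[5,4,7,6,0,3,2,1],[6,7,4,5,2,1,0,3],[7,3,0,4,1,6,5,2]],
 [[6,2,7,4,0,3,5,1],[2,4,1,7,3,6,0,5],[3,7,4,5,6,0,1,2],[4,6,5,0,1,7,2,3],[5,3,6,1,7,2,4,0],[7,5,0,6,2,1,3,4]],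
 [[6,4,7,5,1,2,3,0],[2,7,4,6,3,0,5,1],[3,6,5,1,0,7,2,4],[4,2,1,7,6,3,0,5],[5,3,6,0,7,1,4,2],[7,5,0,4,2,6,1,3]],
 [[4,2,6,5,1,7,3,0],[2,7,0,4,6,1,5,3],[3,4,5,0,7,6,1,2],[5,3,7,6,2,0,4,1],[6,5,1,7,0,3,2,4],[7,6,4,1,3,2,0,5]],
 [[6,2,4,0,3,7,1,5],[2,3,0,4,7,6,5,1],[3,7,5,6,0,1,4,2],[4,5,1,7,6,3,2,0],[5,6,7,1,2,0,3,4],[7,4,6,5,1,2,0,3]],
 [[6,2,0,4,3,7,1,5],[2,4,6,1,7,0,5,3],[3,7,4,5,0,6,2,1],[4,5,1,7,6,3,0,2],[5,6,7,0,2,1,3,4],[7,3,5,6,1,2,4,0]],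
 [[4,5,6,7,2,0,3,1],[2,3,0,5,6,7,1,4],[3,4,5,1,7,6,2,0],[5,7,1,6,0,2,4,3],[6,2,7,4,3,1,0,5],[7,6,4,0,1,3,5,2]],
 [[6,2,4,5,1,7,0,3],[2,7,5,6,0,1,3,4],[3,5,7,4,2,6,1,0],[4,6,1,7,3,0,5,2],[5,4,6,0,7,3,2,1],[7,3,0,1,6,2,4,5]],
 [[4,5,6,1,7,0,2,3],[2,6,7,4,1,3,5,0],[3,2,4,5,6,7,0,1],[5,7,1,6,0,2,3,4],[6,3,0,7,2,1,4,5],[7,4,5,0,3,6,1,2]],
 [[2,6,0,7,3,1,4,5],[3,7,4,5,1,6,0,2],[4,3,1,6,7,2,5,0],[5,4,6,1,0,7,2,3],[6,5,7,4,2,0,3,1],[7,2,5,0,6,3,1,4]],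
 [[6,2,1,4,3,7,5,0],[2,3,7,5,6,0,4,1],[3,4,6,0,7,2,1,5],[4,6,5,7,1,3,0,2],[5,7,4,6,0,1,2,3],[7,5,0,1,2,6,3,4]],
 [[6,2,1,0,7,3,4,5],[2,3,6,5,1,7,0,4],[3,4,7,6,0,2,5,1],[4,7,5,1,2,6,3,0],[5,6,4,7,3,0,1,2],[7,5,0,4,6,1,2,3]],
 [[2,6,4,0,7,3,5,1],[3,5,1,6,0,7,2,4],[4,2,6,7,3,1,0,5],[5,7,0,4,1,6,3,2],[6,4,7,5,2,0,1,3],[7,3,5,1,6,2,4,0]],
 [[6,2,1,7,0,3,4,5],[2,4,6,5,7,1,3,0],[3,5,7,4,6,0,2,1],[4,6,5,0,2,7,1,3],[5,7,4,1,3,6,0,2],[7,3,0,6,1,2,5,4]],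
 [[6,2,4,0,1,7,3,5],[2,7,5,1,0,6,4,3],[3,5,1,6,7,2,0,4],[4,6,0,7,2,3,5,1],[5,3,7,4,6,0,1,2],[7,4,6,5,3,1,2,0]],
 [[6,2,1,4,7,3,5,0],[2,4,7,5,3,6,0,1],[3,5,4,7,6,0,1,2],[4,7,0,6,1,2,3,5],[5,3,6,1,0,7,2,4],[7,6,5,0,2,1,4,3]],
 [[6,2,7,4,3,0,5,1],[2,7,6,0,1,3,4,5],[3,4,1,5,7,6,2,0],[4,5,0,1,6,7,3,2],[5,6,4,7,0,2,1,3],[7,3,5,6,2,1,0,4]],
 [[4,6,7,5,0,2,3,1],[2,5,6,0,3,7,1,4],[3,7,5,1,2,6,4,0],[5,3,4,6,7,1,0,2],[6,4,0,7,1,3,2,5],[7,2,1,4,6,0,5,3]],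
 [[2,4,1,0,6,7,5,3],[3,7,0,4,1,6,2,5],[4,6,5,1,7,0,3,2],[5,2,6,7,0,3,1,4],[6,3,7,5,2,1,4,0],[7,5,4,6,3,2,0,1]],
 [[2,3,4,1,6,7,0,5],[3,7,1,4,0,6,5,2],[4,6,7,5,2,1,3,0],[5,4,6,7,1,0,2,3],[6,2,5,0,7,3,4,1],[7,5,0,6,3,2,1,4]],
 [[2,4,1,6,0,7,5,3],[3,5,7,1,2,6,0,4],[4,3,5,7,6,0,1,2],[5,6,0,4,7,2,3,1],[6,7,4,5,3,1,2,0],[7,2,6,0,1,3,4,5]],
 [[2,4,1,6,7,0,5,3],[3,6,0,5,2,7,1,4],[4,2,7,0,1,6,3,5],[5,7,4,1,6,3,2,0],[6,3,5,7,0,1,4,2],[7,5,6,4,3,2,0,1]],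
 [[2,4,6,5,7,3,0,1],[3,6,7,4,0,1,5,2],[4,2,0,7,3,6,1,5],[5,3,1,0,6,7,2,4],[6,7,5,1,2,0,4,3],[7,5,4,6,1,2,3,0]],
 [[2,4,6,0,1,7,3,5],[3,6,1,5,7,2,0,4],[4,3,5,7,2,6,1,0],[5,7,0,4,6,1,2,3],[6,5,7,1,3,0,4,2],[7,2,4,6,0,3,5,1]],
 [[2,3,6,0,7,1,4,5],[3,6,4,5,1,7,2,0],[4,5,0,7,6,2,1,3],[5,2,7,1,3,6,0,4],[6,7,5,4,2,0,3,1],[7,4,1,6,0,3,5,2]],
 [[2,3,6,4,0,7,1,5],[3,7,1,0,2,6,5,4],[4,5,7,6,3,1,2,0],[5,6,0,7,1,2,4,3],[6,2,4,5,7,0,3,1],[7,4,5,1,6,3,0,2]],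
 [[2,3,6,4,7,1,5,0],[3,7,5,0,6,2,1,4],[4,6,0,1,2,7,3,5],[5,2,7,6,0,3,4,1],[6,5,4,7,1,0,2,3],[7,4,1,5,3,6,0,2]],
 [[2,3,6,1,0,7,4,5],[3,5,4,6,7,1,0,2],[4,7,1,5,2,6,3,0],[5,2,7,0,6,3,1,4],[6,4,0,7,3,2,5,1],[7,6,5,4,1,0,2,3]],
 [[2,3,6,4,7,1,0,5],[3,7,5,6,2,0,1,4],[4,5,0,7,3,6,2,1],[5,6,7,1,0,3,4,2],[6,2,4,0,1,7,5,3],[7,4,1,5,6,2,3,0]],
 [[2,4,0,6,1,7,5,3],[3,5,7,4,6,2,1,0],[4,6,5,7,2,0,3,1],[5,7,6,1,0,3,2,4],[6,3,4,5,7,1,0,2],[7,2,1,0,3,6,4,5]],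
 [[2,4,5,6,7,3,1,0],[3,6,7,4,1,0,2,5],[4,5,6,7,0,1,3,2],[5,7,0,1,2,6,4,3],[6,2,4,0,3,7,5,1],[7,3,1,5,6,2,0,4]],
 [[2,4,0,6,7,3,5,1],[3,6,5,7,1,2,4,0],[4,7,6,5,2,1,0,3],[5,3,4,0,6,7,1,2],[6,5,7,1,3,0,2,4],[7,2,1,4,0,6,3,5]],
 [[2,4,6,5,7,0,1,3],[3,6,0,1,2,7,4,5],[4,2,5,7,0,6,3,1],[5,3,7,0,6,1,2,4],[6,7,1,4,3,2,5,0],[7,5,4,6,1,3,0,2]],
 [[2,3,4,6,7,1,0,5],[3,5,6,7,1,0,4,2],[4,7,1,0,2,6,5,3],[5,2,0,1,6,7,3,4],[6,4,7,5,3,2,1,0],[7,6,5,4,0,3,2,1]],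
 [[2,4,0,6,7,3,1,5],[3,6,1,7,2,0,5,4],[4,2,6,5,1,7,0,3],[5,7,4,0,6,1,3,2],[6,5,7,1,3,2,4,0],[7,3,5,4,0,6,2,1]],
 [[2,3,4,0,6,7,5,1],[3,4,7,6,2,1,0,5],[4,5,0,7,1,6,3,2],[5,7,6,1,3,2,4,0],[6,2,5,4,7,0,1,3],[7,6,1,5,0,3,2,4]],
 [[2,4,6,7,3,0,1,5],[3,6,1,4,7,2,5,0],[4,5,7,0,6,1,2,3],[5,3,0,6,1,7,4,2],[6,7,4,5,2,3,0,1],[7,2,5,1,0,6,3,4]]]"

definition W :: "nat list list" where
"W = [[2,2,0,1,6,6,4,4],
 [2,2,0,4,6,6,1,4],
 [2,2,0,4,6,6,4,1],
 [2,2,0,6,1,6,4,4],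
 [2,2,0,6,6,1,4,4],
 [2,2,1,0,6,6,4,4],
 [2,2,1,4,6,6,0,4],
 [2,2,1,4,6,6,4,0],
 [2,2,1,6,0,6,4,4],
 [2,2,1,6,6,0,4,4],
 [2,2,4,0,6,6,1,4],
 [2,2,4,0,6,6,4,1],
 [2,2,4,1,6,6,0,4],
 [2,2,4,1,6,6,4,0],
 [2,2,4,4,6,6,0,1],
 [2,2,4,4,6,6,1,0],
 [2,2,4,6,0,6,1,4],
 [2,2,4,6,0,6,4,1],
 [2,2,4,6,1,6,0,4],
 [2,2,4,6,1,6,4,0],
 [2,2,4,6,6,0,1,4],
 [2,2,4,6,6,0,4,1],
 [2,2,4,6,6,1,0,4],
 [2,2,4,6,6,1,4,0],
 [2,2,6,0,1,6,4,4],
 [2,2,6,0,6,1,4,4],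
 [2,2,6,1,0,6,4,4],
 [2,2,6,1,6,0,4,4],
 [2,2,6,4,0,6,1,4],
 [2,2,6,4,0,6,4,1],
 [2,2,6,4,1,6,0,4],
 [2,2,6,4,1,6,4,0],
 [2,2,6,4,6,0,1,4],
 [2,2,6,4,6,0,4,1],
 [2,2,6,4,6,1,0,4],
 [2,2,6,4,6,1,4,0],
 [2,2,6,6,0,1,4,4],
 [2,2,6,6,1,0,4,4],
 [2,4,0,1,6,6,2,4],
 [2,4,0,1,6,6,4,2],
 [2,4,0,4,6,6,1,2],
 [2,4,0,4,6,6,2,1],
 [2,4,0,6,1,6,2,4],
 [2,4,0,6,1,6,4,2],
 [2,4,0,6,2,6,1,4],
 [2,4,0,6,2,6,4,1],
 [2,4,0,6,6,1,2,4],
 [2,4,0,6,6,1,4,2],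
 [2,4,0,6,6,2,1,4],
 [2,4,0,6,6,2,4,1],
 [2,4,1,0,6,6,2,4],
 [2,4,1,0,6,6,4,2],
 [2,4,1,4,6,6,0,2],
 [2,4,1,4,6,6,2,0],
 [2,4,1,6,0,6,2,4],
 [2,4,1,6,0,6,4,2],
 [2,4,1,6,2,6,0,4],
 [2,4,1,6,2,6,4,0],
 [2,4,1,6,6,0,2,4],
 [2,4,1,6,6,0,4,2],
 [2,4,1,6,6,2,0,4],
 [2,4,1,6,6,2,4,0],
 [2,4,4,0,6,6,1,2],
 [2,4,4,0,6,6,2,1],
 [2,4,4,1,6,6,0,2],
 [2,4,4,1,6,6,2,0],
 [2,4,4,6,0,6,1,2],
 [2,4,4,6,0,6,2,1],
 [2,4,4,6,1,6,0,2],
 [2,4,4,6,1,6,2,0],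
 [2,4,4,6,2,6,0,1],
 [2,4,4,6,2,6,1,0],
 [2,4,4,6,6,0,1,2],
 [2,4,4,6,6,0,2,1],
 [2,4,4,6,6,1,0,2],
 [2,4,4,6,6,1,2,0],
 [2,4,4,6,6,2,0,1],
 [2,4,4,6,6,2,1,0],
 [2,4,6,0,1,6,2,4],
 [2,4,6,0,1,6,4,2],
 [2,4,6,0,2,6,1,4],
 [2,4,6,0,2,6,4,1],
 [2,4,6,0,6,1,2,4],
 [2,4,6,0,6,1,4,2],
 [2,4,6,0,6,2,1,4],
 [2,4,6,0,6,2,4,1],
 [2,4,6,1,0,6,2,4],
 [2,4,6,1,0,6,4,2],
 [2,4,6,1,2,6,0,4],
 [2,4,6,1,2,6,4,0],
 [2,4,6,1,6,0,2,4],
 [2,4,6,1,6,0,4,2],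
 [2,4,6,1,6,2,0,4],
 [2,4,6,1,6,2,4,0],
 [2,4,6,4,0,6,1,2],
 [2,4,6,4,0,6,2,1],
 [2,4,6,4,1,6,0,2],
 [2,4,6,4,1,6,2,0],
 [2,4,6,4,2,6,0,1],
 [2,4,6,4,2,6,1,0],
 [2,4,6,4,6,0,1,2],
 [2,4,6,4,6,0,2,1],
 [2,4,6,4,6,1,0,2],
 [2,4,6,4,6,1,2,0],
 [2,4,6,4,6,2,0,1],
 [2,4,6,4,6,2,1,0],
 [2,4,6,6,0,1,2,4],
 [2,4,6,6,0,1,4,2],
 [2,4,6,6,0,2,1,4],
 [2,4,6,6,0,2,4,1],
 [2,4,6,6,1,0,2,4],
 [2,4,6,6,1,0,4,2],
 [2,4,6,6,1,2,0,4],
 [2,4,6,6,1,2,4,0],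
 [2,4,6,6,2,0,1,4],
 [2,4,6,6,2,0,4,1],
 [2,4,6,6,2,1,0,4],
 [2,4,6,6,2,1,4,0],
 [2,6,0,1,2,6,4,4],
 [2,6,0,1,6,2,4,4],
 [2,6,0,4,1,6,2,4],
 [2,6,0,4,1,6,4,2],
 [2,6,0,4,2,6,1,4],
 [2,6,0,4,2,6,4,1],
 [2,6,0,4,6,1,2,4],
 [2,6,0,4,6,1,4,2],
 [2,6,0,4,6,2,1,4],
 [2,6,0,4,6,2,4,1],
 [2,6,0,6,1,2,4,4],
 [2,6,0,6,2,1,4,4],
 [2,6,1,0,2,6,4,4],
 [2,6,1,0,6,2,4,4],
 [2,6,1,4,0,6,2,4],
 [2,6,1,4,0,6,4,2],
 [2,6,1,4,2,6,0,4],
 [2,6,1,4,2,6,4,0],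
 [2,6,1,4,6,0,2,4],
 [2,6,1,4,6,0,4,2],
 [2,6,1,4,6,2,0,4],
 [2,6,1,4,6,2,4,0],
 [2,6,1,6,0,2,4,4],
 [2,6,1,6,2,0,4,4],
 [2,6,4,0,1,6,2,4],
 [2,6,4,0,1,6,4,2],
 [2,6,4,0,2,6,1,4],
 [2,6,4,0,2,6,4,1],
 [2,6,4,0,6,1,2,4],
 [2,6,4,0,6,1,4,2],
 [2,6,4,0,6,2,1,4],
 [2,6,4,0,6,2,4,1],
 [2,6,4,1,0,6,2,4],
 [2,6,4,1,0,6,4,2],
 [2,6,4,1,2,6,0,4],
 [2,6,4,1,2,6,4,0],
 [2,6,4,1,6,0,2,4],
 [2,6,4,1,6,0,4,2],
 [2,6,4,1,6,2,0,4],
 [2,6,4,1,6,2,4,0],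
 [2,6,4,4,0,6,1,2],
 [2,6,4,4,0,6,2,1],
 [2,6,4,4,1,6,0,2],
 [2,6,4,4,1,6,2,0],
 [2,6,4,4,2,6,0,1],
 [2,6,4,4,2,6,1,0],
 [2,6,4,4,6,0,1,2],
 [2,6,4,4,6,0,2,1],
 [2,6,4,4,6,1,0,2],
 [2,6,4,4,6,1,2,0],
 [2,6,4,4,6,2,0,1],
 [2,6,4,4,6,2,1,0],
 [2,6,4,6,0,1,2,4],
 [2,6,4,6,0,1,4,2],
 [2,6,4,6,0,2,1,4],
 [2,6,4,6,0,2,4,1],
 [2,6,4,6,1,0,2,4],
 [2,6,4,6,1,0,4,2],
 [2,6,4,6,1,2,0,4],
 [2,6,4,6,1,2,4,0],
 [2,6,4,6,2,0,1,4],
 [2,6,4,6,2,0,4,1],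
 [2,6,4,6,2,1,0,4],
 [2,6,4,6,2,1,4,0],
 [2,6,6,0,1,2,4,4],
 [2,6,6,0,2,1,4,4],
 [2,6,6,1,0,2,4,4],
 [2,6,6,1,2,0,4,4],
 [2,6,6,4,0,1,2,4],
 [2,6,6,4,0,1,4,2],
 [2,6,6,4,0,2,1,4],
 [2,6,6,4,0,2,4,1],
 [2,6,6,4,1,0,2,4],
 [2,6,6,4,1,0,4,2],
 [2,6,6,4,1,2,0,4],
 [2,6,6,4,1,2,4,0],
 [2,6,6,4,2,0,1,4],
 [2,6,6,4,2,0,4,1],
 [2,6,6,4,2,1,0,4],
 [2,6,6,4,2,1,4,0],
 [4,2,0,1,6,6,2,4],
 [4,2,0,1,6,6,4,2],
 [4,2,0,4,6,6,1,2],
 [4,2,0,4,6,6,2,1],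
 [4,2,0,6,1,6,2,4],
 [4,2,0,6,1,6,4,2],
 [4,2,0,6,2,6,1,4],
 [4,2,0,6,2,6,4,1],
 [4,2,0,6,6,1,2,4],
 [4,2,0,6,6,1,4,2],
 [4,2,0,6,6,2,1,4],
 [4,2,0,6,6,2,4,1],
 [4,2,1,0,6,6,2,4],
 [4,2,1,0,6,6,4,2],
 [4,2,1,4,6,6,0,2],
 [4,2,1,4,6,6,2,0],
 [4,2,1,6,0,6,2,4],
 [4,2,1,6,0,6,4,2],
 [4,2,1,6,2,6,0,4],
 [4,2,1,6,2,6,4,0],
 [4,2,1,6,6,0,2,4],
 [4,2,1,6,6,0,4,2],
 [4,2,1,6,6,2,0,4],
 [4,2,1,6,6,2,4,0],
 [4,2,4,0,6,6,1,2],
 [4,2,4,0,6,6,2,1],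
 [4,2,4,1,6,6,0,2],
 [4,2,4,1,6,6,2,0],
 [4,2,4,6,0,6,1,2],
 [4,2,4,6,0,6,2,1],
 [4,2,4,6,1,6,0,2],
 [4,2,4,6,1,6,2,0],
 [4,2,4,6,2,6,0,1],
 [4,2,4,6,2,6,1,0],
 [4,2,4,6,6,0,1,2],
 [4,2,4,6,6,0,2,1],
 [4,2,4,6,6,1,0,2],
 [4,2,4,6,6,1,2,0],
 [4,2,4,6,6,2,0,1],
 [4,2,4,6,6,2,1,0],
 [4,2,6,0,1,6,2,4],
 [4,2,6,0,1,6,4,2],
 [4,2,6,0,2,6,1,4],
 [4,2,6,0,2,6,4,1],
 [4,2,6,0,6,1,2,4],
 [4,2,6,0,6,1,4,2],
 [4,2,6,0,6,2,1,4],
 [4,2,6,0,6,2,4,1],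
 [4,2,6,1,0,6,2,4],
 [4,2,6,1,0,6,4,2],
 [4,2,6,1,2,6,0,4],
 [4,2,6,1,2,6,4,0],
 [4,2,6,1,6,0,2,4],
 [4,2,6,1,6,0,4,2],
 [4,2,6,1,6,2,0,4],
 [4,2,6,1,6,2,4,0],
 [4,2,6,4,0,6,1,2],
 [4,2,6,4,0,6,2,1],
 [4,2,6,4,1,6,0,2],
 [4,2,6,4,1,6,2,0],
 [4,2,6,4,2,6,0,1],
 [4,2,6,4,2,6,1,0],
 [4,2,6,4,6,0,1,2],
 [4,2,6,4,6,0,2,1],
 [4,2,6,4,6,1,0,2],
 [4,2,6,4,6,1,2,0],
 [4,2,6,4,6,2,0,1],
 [4,2,6,4,6,2,1,0],
 [4,2,6,6,0,1,2,4],
 [4,2,6,6,0,1,4,2],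
 [4,2,6,6,0,2,1,4],
 [4,2,6,6,0,2,4,1],
 [4,2,6,6,1,0,2,4],
 [4,2,6,6,1,0,4,2],
 [4,2,6,6,1,2,0,4],
 [4,2,6,6,1,2,4,0],
 [4,2,6,6,2,0,1,4],
 [4,2,6,6,2,0,4,1],
 [4,2,6,6,2,1,0,4],
 [4,2,6,6,2,1,4,0],
 [4,4,0,1,6,6,2,2],
 [4,4,0,6,1,6,2,2],
 [4,4,0,6,2,6,1,2],
 [4,4,0,6,2,6,2,1],
 [4,4,0,6,6,1,2,2],
 [4,4,0,6,6,2,1,2],
 [4,4,0,6,6,2,2,1],
 [4,4,1,0,6,6,2,2],
 [4,4,1,6,0,6,2,2],
 [4,4,1,6,2,6,0,2],
 [4,4,1,6,2,6,2,0],
 [4,4,1,6,6,0,2,2],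
 [4,4,1,6,6,2,0,2],
 [4,4,1,6,6,2,2,0],
 [4,4,6,0,1,6,2,2],
 [4,4,6,0,2,6,1,2],
 [4,4,6,0,2,6,2,1],
 [4,4,6,0,6,1,2,2],
 [4,4,6,0,6,2,1,2],
 [4,4,6,0,6,2,2,1],
 [4,4,6,1,0,6,2,2],
 [4,4,6,1,2,6,0,2],
 [4,4,6,1,2,6,2,0],
 [4,4,6,1,6,0,2,2],
 [4,4,6,1,6,2,0,2],
 [4,4,6,1,6,2,2,0],
 [4,4,6,6,0,1,2,2],
 [4,4,6,6,0,2,1,2],
 [4,4,6,6,0,2,2,1],
 [4,4,6,6,1,0,2,2],
 [4,4,6,6,1,2,0,2],
 [4,4,6,6,1,2,2,0],
 [4,4,6,6,2,0,1,2],
 [4,4,6,6,2,0,2,1],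
 [4,4,6,6,2,1,0,2],
 [4,4,6,6,2,1,2,0],
 [4,4,6,6,2,2,0,1],
 [4,4,6,6,2,2,1,0],
 [4,6,0,1,2,6,2,4],
 [4,6,0,1,2,6,4,2],
 [4,6,0,1,6,2,2,4],
 [4,6,0,1,6,2,4,2],
 [4,6,0,4,1,6,2,2],
 [4,6,0,4,2,6,1,2],
 [4,6,0,4,2,6,2,1],
 [4,6,0,4,6,1,2,2],
 [4,6,0,4,6,2,1,2],
 [4,6,0,4,6,2,2,1],
 [4,6,0,6,1,2,2,4],
 [4,6,0,6,1,2,4,2],
 [4,6,0,6,2,1,2,4],
 [4,6,0,6,2,1,4,2],
 [4,6,0,6,2,2,1,4],
 [4,6,0,6,2,2,4,1],
 [4,6,1,0,2,6,2,4],
 [4,6,1,0,2,6,4,2],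
 [4,6,1,0,6,2,2,4],
 [4,6,1,0,6,2,4,2],
 [4,6,1,4,0,6,2,2],
 [4,6,1,4,2,6,0,2],
 [4,6,1,4,2,6,2,0],
 [4,6,1,4,6,0,2,2],
 [4,6,1,4,6,2,0,2],
 [4,6,1,4,6,2,2,0],
 [4,6,1,6,0,2,2,4],
 [4,6,1,6,0,2,4,2],
 [4,6,1,6,2,0,2,4],
 [4,6,1,6,2,0,4,2],
 [4,6,1,6,2,2,0,4],
 [4,6,1,6,2,2,4,0],
 [4,6,4,0,1,6,2,2],
 [4,6,4,0,2,6,1,2],
 [4,6,4,0,2,6,2,1],
 [4,6,4,0,6,1,2,2],
 [4,6,4,0,6,2,1,2],
 [4,6,4,0,6,2,2,1],
 [4,6,4,1,0,6,2,2],
 [4,6,4,1,2,6,0,2],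
 [4,6,4,1,2,6,2,0],
 [4,6,4,1,6,0,2,2],
 [4,6,4,1,6,2,0,2],
 [4,6,4,1,6,2,2,0],
 [4,6,4,6,0,1,2,2],
 [4,6,4,6,0,2,1,2],
 [4,6,4,6,0,2,2,1],
 [4,6,4,6,1,0,2,2],
 [4,6,4,6,1,2,0,2],
 [4,6,4,6,1,2,2,0],
 [4,6,4,6,2,0,1,2],
 [4,6,4,6,2,0,2,1],
 [4,6,4,6,2,1,0,2],
 [4,6,4,6,2,1,2,0],
 [4,6,4,6,2,2,0,1],
 [4,6,4,6,2,2,1,0],
 [4,6,6,0,1,2,2,4],
 [4,6,6,0,1,2,4,2],
 [4,6,6,0,2,1,2,4],
 [4,6,6,0,2,1,4,2],
 [4,6,6,0,2,2,1,4],
 [4,6,6,0,2,2,4,1],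
 [4,6,6,1,0,2,2,4],
 [4,6,6,1,0,2,4,2],
 [4,6,6,1,2,0,2,4],
 [4,6,6,1,2,0,4,2],
 [4,6,6,1,2,2,0,4],
 [4,6,6,1,2,2,4,0],
 [4,6,6,4,0,1,2,2],
 [4,6,6,4,0,2,1,2],
 [4,6,6,4,0,2,2,1],
 [4,6,6,4,1,0,2,2],
 [4,6,6,4,1,2,0,2],
 [4,6,6,4,1,2,2,0],
 [4,6,6,4,2,0,1,2],
 [4,6,6,4,2,0,2,1],
 [4,6,6,4,2,1,0,2],
 [4,6,6,4,2,1,2,0],
 [4,6,6,4,2,2,0,1],
 [4,6,6,4,2,2,1,0],
 [6,2,0,1,2,6,4,4],
 [6,2,0,1,6,2,4,4],
 [6,2,0,4,1,6,2,4],
 [6,2,0,4,1,6,4,2],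
 [6,2,0,4,2,6,1,4],
 [6,2,0,4,2,6,4,1],
 [6,2,0,4,6,1,2,4],
 [6,2,0,4,6,1,4,2],
 [6,2,0,4,6,2,1,4],
 [6,2,0,4,6,2,4,1],
 [6,2,0,6,1,2,4,4],
 [6,2,0,6,2,1,4,4],
 [6,2,1,0,2,6,4,4],
 [6,2,1,0,6,2,4,4],
 [6,2,1,4,0,6,2,4],
 [6,2,1,4,0,6,4,2],
 [6,2,1,4,2,6,0,4],
 [6,2,1,4,2,6,4,0],
 [6,2,1,4,6,0,2,4],
 [6,2,1,4,6,0,4,2],
 [6,2,1,4,6,2,0,4],
 [6,2,1,4,6,2,4,0],
 [6,2,1,6,0,2,4,4],
 [6,2,1,6,2,0,4,4],
 [6,2,4,0,1,6,2,4],
 [6,2,4,0,1,6,4,2],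
 [6,2,4,0,2,6,1,4],
 [6,2,4,0,2,6,4,1],
 [6,2,4,0,6,1,2,4],
 [6,2,4,0,6,1,4,2],
 [6,2,4,0,6,2,1,4],
 [6,2,4,0,6,2,4,1],
 [6,2,4,1,0,6,2,4],
 [6,2,4,1,0,6,4,2],
 [6,2,4,1,2,6,0,4],
 [6,2,4,1,2,6,4,0],
 [6,2,4,1,6,0,2,4],
 [6,2,4,1,6,0,4,2],
 [6,2,4,1,6,2,0,4],
 [6,2,4,1,6,2,4,0],
 [6,2,4,4,0,6,1,2],
 [6,2,4,4,0,6,2,1],
 [6,2,4,4,1,6,0,2],
 [6,2,4,4,1,6,2,0],
 [6,2,4,4,2,6,0,1],
 [6,2,4,4,2,6,1,0],
 [6,2,4,4,6,0,1,2],
 [6,2,4,4,6,0,2,1],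
 [6,2,4,4,6,1,0,2],
 [6,2,4,4,6,1,2,0],
 [6,2,4,4,6,2,0,1],
 [6,2,4,4,6,2,1,0],
 [6,2,4,6,0,1,2,4],
 [6,2,4,6,0,1,4,2],
 [6,2,4,6,0,2,1,4],
 [6,2,4,6,0,2,4,1],
 [6,2,4,6,1,0,2,4],
 [6,2,4,6,1,0,4,2],
 [6,2,4,6,1,2,0,4],
 [6,2,4,6,1,2,4,0],
 [6,2,4,6,2,0,1,4],
 [6,2,4,6,2,0,4,1],
 [6,2,4,6,2,1,0,4],
 [6,2,4,6,2,1,4,0],
 [6,2,6,0,1,2,4,4],
 [6,2,6,0,2,1,4,4],
 [6,2,6,1,0,2,4,4],
 [6,2,6,1,2,0,4,4],
 [6,2,6,4,0,1,2,4],
 [6,2,6,4,0,1,4,2],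
 [6,2,6,4,0,2,1,4],
 [6,2,6,4,0,2,4,1],
 [6,2,6,4,1,0,2,4],
 [6,2,6,4,1,0,4,2],
 [6,2,6,4,1,2,0,4],
 [6,2,6,4,1,2,4,0],
 [6,2,6,4,2,0,1,4],
 [6,2,6,4,2,0,4,1],
 [6,2,6,4,2,1,0,4],
 [6,2,6,4,2,1,4,0],
 [6,4,0,1,2,6,2,4],
 [6,4,0,1,2,6,4,2],
 [6,4,0,1,6,2,2,4],
 [6,4,0,1,6,2,4,2],
 [6,4,0,4,1,6,2,2],
 [6,4,0,4,2,6,1,2],
 [6,4,0,4,2,6,2,1],
 [6,4,0,4,6,1,2,2],
 [6,4,0,4,6,2,1,2],
 [6,4,0,4,6,2,2,1],
 [6,4,0,6,1,2,2,4],
 [6,4,0,6,1,2,4,2],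
 [6,4,0,6,2,1,2,4],
 [6,4,0,6,2,1,4,2],
 [6,4,0,6,2,2,1,4],
 [6,4,0,6,2,2,4,1],
 [6,4,1,0,2,6,2,4],
 [6,4,1,0,2,6,4,2],
 [6,4,1,0,6,2,2,4],
 [6,4,1,0,6,2,4,2],
 [6,4,1,4,0,6,2,2],
 [6,4,1,4,2,6,0,2],
 [6,4,1,4,2,6,2,0],
 [6,4,1,4,6,0,2,2],
 [6,4,1,4,6,2,0,2],
 [6,4,1,4,6,2,2,0],
 [6,4,1,6,0,2,2,4],
 [6,4,1,6,0,2,4,2],
 [6,4,1,6,2,0,2,4],
 [6,4,1,6,2,0,4,2],
 [6,4,1,6,2,2,0,4],
 [6,4,1,6,2,2,4,0],
 [6,4,4,0,1,6,2,2],
 [6,4,4,0,2,6,1,2],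
 [6,4,4,0,2,6,2,1],
 [6,4,4,0,6,1,2,2],
 [6,4,4,0,6,2,1,2],
 [6,4,4,0,6,2,2,1],
 [6,4,4,1,0,6,2,2],
 [6,4,4,1,2,6,0,2],
 [6,4,4,1,2,6,2,0],
 [6,4,4,1,6,0,2,2],
 [6,4,4,1,6,2,0,2],
 [6,4,4,1,6,2,2,0],
 [6,4,4,6,0,1,2,2],
 [6,4,4,6,0,2,1,2],
 [6,4,4,6,0,2,2,1],
 [6,4,4,6,1,0,2,2],
 [6,4,4,6,1,2,0,2],
 [6,4,4,6,1,2,2,0],
 [6,4,4,6,2,0,1,2],
 [6,4,4,6,2,0,2,1],
 [6,4,4,6,2,1,0,2],
 [6,4,4,6,2,1,2,0],
 [6,4,4,6,2,2,0,1],
 [6,4,4,6,2,2,1,0],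
 [6,4,6,0,1,2,2,4],
 [6,4,6,0,1,2,4,2],
 [6,4,6,0,2,1,2,4],
 [6,4,6,0,2,1,4,2],
 [6,4,6,0,2,2,1,4],
 [6,4,6,0,2,2,4,1],
 [6,4,6,1,0,2,2,4],
 [6,4,6,1,0,2,4,2],
 [6,4,6,1,2,0,2,4],
 [6,4,6,1,2,0,4,2],
 [6,4,6,1,2,2,0,4],
 [6,4,6,1,2,2,4,0],
 [6,4,6,4,0,1,2,2],
 [6,4,6,4,0,2,1,2],
 [6,4,6,4,0,2,2,1],
 [6,4,6,4,1,0,2,2],
 [6,4,6,4,1,2,0,2],
 [6,4,6,4,1,2,2,0],
 [6,4,6,4,2,0,1,2],
 [6,4,6,4,2,0,2,1],
 [6,4,6,4,2,1,0,2],
 [6,4,6,4,2,1,2,0],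
 [6,4,6,4,2,2,0,1],
 [6,4,6,4,2,2,1,0],
 [6,6,0,1,2,2,4,4],
 [6,6,0,4,1,2,2,4],
 [6,6,0,4,1,2,4,2],
 [6,6,0,4,2,1,2,4],
 [6,6,0,4,2,1,4,2],
 [6,6,0,4,2,2,1,4],
 [6,6,0,4,2,2,4,1],
 [6,6,1,0,2,2,4,4],
 [6,6,1,4,0,2,2,4],
 [6,6,1,4,0,2,4,2],
 [6,6,1,4,2,0,2,4],
 [6,6,1,4,2,0,4,2],
 [6,6,1,4,2,2,0,4],
 [6,6,1,4,2,2,4,0],
 [6,6,4,0,1,2,2,4],
 [6,6,4,0,1,2,4,2],
 [6,6,4,0,2,1,2,4],
 [6,6,4,0,2,1,4,2],
 [6,6,4,0,2,2,1,4],
 [6,6,4,0,2,2,4,1],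
 [6,6,4,1,0,2,2,4],
 [6,6,4,1,0,2,4,2],
 [6,6,4,1,2,0,2,4],
 [6,6,4,1,2,0,4,2],
 [6,6,4,1,2,2,0,4],
 [6,6,4,1,2,2,4,0],
 [6,6,4,4,0,1,2,2],
 [6,6,4,4,0,2,1,2],
 [6,6,4,4,0,2,2,1],
 [6,6,4,4,1,0,2,2],
 [6,6,4,4,1,2,0,2],
 [6,6,4,4,1,2,2,0],
 [6,6,4,4,2,0,1,2],
 [6,6,4,4,2,0,2,1],
 [6,6,4,4,2,1,0,2],
 [6,6,4,4,2,1,2,0],
 [6,6,4,4,2,2,0,1],
 [6,6,4,4,2,2,1,0]]"

lemma C1: "list_all isfact Base" unfolding Base_def by code_simp

lemma Cgen: "gen 8 0 [] = W" unfolding W_def by code_simp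

fun ssorted :: "nat list list \<Rightarrow> bool" where
"ssorted (x#y#zs) = (x < y \<and> ssorted (y#zs))" | "ssorted _ = True"

lemma ssorted_imp: "ssorted xs \<Longrightarrow> sorted_wrt (<) xs"
  by (induction xs rule: ssorted.induct) (auto intro: less_trans)

lemma Cw0: "ssorted W" unfolding W_def by code_simp

lemma Cw: "sorted_wrt (<) W" using Cw0 ssorted_imp by blast

lemma Csort: "msort (map (map cv) (concat Base)) = W" unfolding Base_def W_def by code_simp

theorem theorem3p1:
  shows "has_perfect_partition 8 A_L82"
proof -
  define BE where "BE = concat Base"
  have mseq: "mset (map (map cv) BE) = mset W"
    using Csort mset_msort[of "map (map cv) (concat Base)"] by (simp add: BE_def)
  have dW: "distinct W" using Cw strict_sorted_iff by blast
  have dBEc: "distinct (map (map cv) BE)" using mset_eq_imp_distinct_iff[OF mseq] dW by simp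
  have setBE: "set (map (map cv) BE) = set W" using mset_eq_setD[OF mseq] .
  have dBE: "distinct BE" using dBEc distinct_map by blast
  have injcv: "inj_on (map cv) (set BE)" using dBEc distinct_map by blast
  have facts: "\<forall>F\<in>set Base. isfact F" using C1 by (simp add: list_all_iff)
  have okBE: "okl ys" if "ys \<in> set BE" for ys
  proof -
    from that obtain F where F: "F \<in> set Base" "ys \<in> set F" by (auto simp: BE_def)
    then have "isfact F" using facts by blast
    then show ?thesis using F(2) by (simp add: isfact_def list_all_iff)
  qed
  have inBE: "ys \<in> set BE" if "F \<in> set Base" "ys \<in> set F" for F ys
    using that by (auto simp: BE_def)
  have dconc: "set F \<inter> set G = {}" if "F \<in> set Base" "G \<in> set Base" "F \<noteq> G" for F G
    using dBE that unfolding BE_def distinct_concat_iff by blast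
  define Q where "Q = {mat ` set (map (map (flipv f)) F) | f F. \<not> f 0 \<and> F \<in> set Base}"
  have sums: "\<forall>S\<in>Q. \<forall>i<8. \<forall>j<8. (\<Sum>P\<in>S. P i j) = A_L82 i j"
  proof (intro ballI allI impI)
    fix S i j assume S: "S \<in> Q" and i: "i < (8::nat)" and j: "j < (8::nat)"
    then obtain f F where SF: "S = mat ` set (map (map (flipv f)) F)" "F \<in> set Base"
      by (auto simp: Q_def)
    have "isfact (map (map (flipv f)) F)" using facts SF(2) isfact_flip by blast
    then show "(\<Sum>P\<in>S. P i j) = A_L82 i j" using fact_sum[OF _ i j] SF(1) by blast
  qed
  have union: "\<Union>Q = perm_matrices_below 8 A_L82"
    unfolding below_eq
  proof
    show "\<Union>Q \<subseteq> mat ` {xs. okl xs}"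
    proof
      fix P assume "P \<in> \<Union>Q"
      then obtain f F ys where "F \<in> set Base" "ys \<in> set F" "P = mat (map (flipv f) ys)"
        by (auto simp: Q_def)
      moreover have "okl (map (flipv f) ys)" using calculation inBE okBE okl_flip by blast
      ultimately show "P \<in> mat ` {xs. okl xs}" by blast
    qed
    show "mat ` {xs. okl xs} \<subseteq> \<Union>Q"
    proof
      fix P assume "P \<in> mat ` {xs. okl xs}"
      then obtain xs where ox: "okl xs" and P: "P = mat xs" by blast
      have "map cv xs \<in> set W" using cv_gen[OF ox] Cgen by simp
      then obtain ys where ys: "ys \<in> set BE" "map cv ys = map cv xs"
        using setBE by (metis imageE set_map)
      obtain F where F: "F \<in> set Base" "ys \<in> set F" using ys(1) by (auto simp: BE_def)
      obtain f where f: "\<not> f 0" "xs = map (flipv f) ys"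
        using cv_flip_exists[OF ox okBE[OF ys(1)] ys(2)[symmetric]] by blast
      have "P \<in> mat ` set (map (map (flipv f)) F)" using P f F by auto
      moreover have "mat ` set (map (map (flipv f)) F) \<in> Q" using f F unfolding Q_def by blast
      ultimately show "P \<in> \<Union>Q" by blast
    qed
  qed
  have ne: "{} \<notin> Q"
  proof
    assume "{} \<in> Q"
    then obtain f F where "{} = mat ` set (map (map (flipv f)) F)" "F \<in> set Base"
      by (auto simp: Q_def)
    moreover have "length F = 6" using facts calculation(2) by (simp add: isfact_def)
    ultimately show False by (cases F) auto
  qed
  have disj: "disjoint Q"
    unfolding disjoint_def pairwise_def disjnt_def
  proof (intro ballI impI)
    fix S1 S2 assume S1: "S1 \<in> Q" and S2: "S2 \<in> Q" and ne12: "S1 \<noteq> S2"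
    show "S1 \<inter> S2 = {}"
    proof (rule ccontr)
      assume "S1 \<inter> S2 \<noteq> {}"
      then obtain P where P1: "P \<in> S1" and P2: "P \<in> S2" by blast
      obtain f F where S1F: "S1 = mat ` set (map (map (flipv f)) F)" "\<not> f 0" "F \<in> set Base"
        using S1 by (auto simp: Q_def)
      obtain g G where S2G: "S2 = mat ` set (map (map (flipv g)) G)" "\<not> g 0" "G \<in> set Base"
        using S2 by (auto simp: Q_def)
      obtain ys where ys: "ys \<in> set F" "P = mat (map (flipv f) ys)" using P1 S1F(1) by auto
      obtain zs where zs: "zs \<in> set G" "P = mat (map (flipv g) zs)" using P2 S2G(1) by auto
      have oy: "okl ys" using okBE inBE S1F(3) ys(1) by blast
      have oz: "okl zs" using okBE inBE S2G(3) zs(1) by blast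
      have eqf: "map (flipv f) ys = map (flipv g) zs"
        using mat_inj[OF okl_flip[OF oy] okl_flip[OF oz]] ys(2) zs(2) by simp
      have "map cv ys = map cv (map (flipv f) ys)" using cv_flipv[of f, OF S1F(2)] by simp
      also have "\<dots> = map cv (map (flipv g) zs)" using eqf by simp
      also have "\<dots> = map cv zs" using cv_flipv[of g, OF S2G(2)] by simp
      finally have "ys = zs" using injcv inBE S1F(3) S2G(3) ys(1) zs(1) by (meson inj_onD)
      then have FG: "F = G" using dconc S1F(3) S2G(3) ys(1) zs(1) by blast
      have agree: "map (flipv f) ws = map (flipv g) ws" if "ws \<in> set F" for ws
        using flip_agree[OF oy _ eqf[unfolded \<open>ys = zs\<close>[symmetric]]] okBE inBE S1F(3) that by blast
      have "map (map (flipv f)) F = map (map (flipv g)) F"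
        using agree by (simp add: map_eq_conv)
      then have "S1 = S2" by (simp only: S1F(1) S2G(1) FG[symmetric])
      then show False using ne12 by simp
    qed
  qed
  show ?thesis
    unfolding has_perfect_partition_def partition_on_def
    using union disj ne sums by blast
qed

end
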